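(* Let $\iota:M(\mathbb R(x))\times M(\mathbb R(y))\to M(\mathbb R(x,y))$ be a compatible embedding. Then the topology induced by $\iota$ on $M(\mathbb R(x))\times M(\mathbb R(y))$ is finer than the product topology.
   Context: $x,y$ are algebraically independent over $\mathbb R$. For a field $K$, $M(K)$ is the set of $\mathbb R$-places $K\to\mathbb R\cup\{\infty\}$, with topology generated by the subbasis $H'(b)=\{\zeta\in M(K)\mid \infty\ne\zeta(b)>0\}$, $b\in K$. Let $\rho:M(\mathbb R(x,y))\to M(\mathbb R(x))\times M(\mathbb R(y))$, $\xi\mapsto(\xi|_{\mathbb R(x)},\xi|_{\mathbb R(y)})$; a compatible embedding is an injective map $\iota$ with $\rho\circ\iota=\mathrm{id}$. The induced topology on $M(\mathbb R(x))\times M(\mathbb R(y))$ consists of the preimages under $\iota$ of the sets $U\cap\mathrm{im}(\iota)$, $U$ open in $M(\mathbb R(x,y))$. *)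

theory Defs
  imports "HOL-Analysis.Analysis" "HOL-Computational_Algebra.Computational_Algebra"
    "HOL-Computational_Algebra.Normalized_Fraction" "HOL-Computational_Algebra.Field_as_Ring"
begin

text \<open>Values in \<open>\<real> \<union> {\<infinity>}\<close> are modelled by \<open>real option\<close>, with \<open>None\<close> = \<open>\<infinity>\<close>.\<close>

definition is_place :: "('k::field \<Rightarrow> real option) \<Rightarrow> bool" where
  "is_place \<xi> \<longleftrightarrow>
     \<xi> 1 = Some 1 \<and>
     (\<forall>a b. \<xi> a \<noteq> None \<and> \<xi> b \<noteq> None \<longrightarrow>
        \<xi> (a + b) = Some (the (\<xi> a) + the (\<xi> b)) \<and>
        \<xi> (a * b) = Some (the (\<xi> a) * the (\<xi> b))) \<and>
     (\<forall>a. a \<noteq> 0 \<longrightarrow> (\<xi> a = None \<longleftrightarrow> \<xi> (inverse a) = Some 0))"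

text \<open>The fields: \<open>\<real>(x)\<close> and \<open>\<real>(y)\<close> are both \<open>real poly fract\<close>;
  \<open>\<real>(x,y)\<close> is the fraction field of \<open>\<real>[x][y]\<close>, i.e. \<open>real poly poly fract\<close>
  (outer polynomial variable = y, inner = x).\<close>
type_synonym Rx = "real poly fract"
type_synonym Rxy = "real poly poly fract"

definition emb_x :: "Rx \<Rightarrow> Rxy" where
  "emb_x r = (case quot_of_fract r of (p, q) \<Rightarrow> Fract [:p:] [:q:])"

definition emb_y :: "Rx \<Rightarrow> Rxy" where
  "emb_y r = (case quot_of_fract r of
      (p, q) \<Rightarrow> Fract (map_poly (\<lambda>c. [:c:]) p) (map_poly (\<lambda>c. [:c:]) q))"

definition M_Rx :: "(Rx \<Rightarrow> real option) set" where
  "M_Rx = {\<xi>. is_place \<xi> \<and> (\<forall>c. \<xi> (Fract [:c:] 1) = Some c)}"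

definition M_Rxy :: "(Rxy \<Rightarrow> real option) set" where
  "M_Rxy = {\<xi>. is_place \<xi> \<and> (\<forall>c. \<xi> (Fract [:[:c:]:] 1) = Some c)}"

definition Hprime :: "('k \<Rightarrow> real option) set \<Rightarrow> 'k \<Rightarrow> ('k \<Rightarrow> real option) set" where
  "Hprime M b = {\<zeta> \<in> M. \<exists>r. \<zeta> b = Some r \<and> r > 0}"

definition place_topology :: "('k \<Rightarrow> real option) set \<Rightarrow> ('k \<Rightarrow> real option) topology" where
  "place_topology M = subtopology (topology_generated_by (range (Hprime M))) M"

definition rho :: "(Rxy \<Rightarrow> real option) \<Rightarrow> (Rx \<Rightarrow> real option) \<times> (Rx \<Rightarrow> real option)" where
  "rho \<xi> = (\<xi> \<circ> emb_x, \<xi> \<circ> emb_y)"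

definition compatible_embedding ::
  "((Rx \<Rightarrow> real option) \<times> (Rx \<Rightarrow> real option) \<Rightarrow> (Rxy \<Rightarrow> real option)) \<Rightarrow> bool" where
  "compatible_embedding \<iota> \<longleftrightarrow>
     \<iota> ` (M_Rx \<times> M_Rx) \<subseteq> M_Rxy \<and> inj_on \<iota> (M_Rx \<times> M_Rx) \<and>
     (\<forall>p \<in> M_Rx \<times> M_Rx. rho (\<iota> p) = p)"

definition induced_topology ::
  "((Rx \<Rightarrow> real option) \<times> (Rx \<Rightarrow> real option) \<Rightarrow> (Rxy \<Rightarrow> real option))
     \<Rightarrow> ((Rx \<Rightarrow> real option) \<times> (Rx \<Rightarrow> real option)) topology" where
  "induced_topology \<iota> = topology (\<lambda>W. \<exists>U. openin (place_topology M_Rxy) U \<and>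
        W = {p \<in> M_Rx \<times> M_Rx. \<iota> p \<in> U \<inter> \<iota> ` (M_Rx \<times> M_Rx)})"

end

theory Submission
  imports Defs
begin

definition indP where
  "indP \<iota> = (\<lambda>W. \<exists>U. openin (place_topology M_Rxy) U \<and>
        W = {p \<in> M_Rx \<times> M_Rx. \<iota> p \<in> U \<inter> \<iota> ` (M_Rx \<times> M_Rx)})"

lemma istop_indP: "istopology (indP \<iota>)"
  unfolding istopology_def
proof (intro conjI allI impI)
  fix S T assume "indP \<iota> S" "indP \<iota> T"
  then obtain U V where "openin (place_topology M_Rxy) U" "S = {p \<in> M_Rx \<times> M_Rx. \<iota> p \<in> U \<inter> \<iota> ` (M_Rx \<times> M_Rx)}"
     "openin (place_topology M_Rxy) V" "T = {p \<in> M_Rx \<times> M_Rx. \<iota> p \<in> V \<inter> \<iota> ` (M_Rx \<times> M_Rx)}"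
    unfolding indP_def by blast
  then show "indP \<iota> (S \<inter> T)" unfolding indP_def
    by (intro exI[of _ "U \<inter> V"]) auto
next
  fix K assume "\<forall>S\<in>K. indP \<iota> S"
  then obtain f where f: "\<forall>S\<in>K. openin (place_topology M_Rxy) (f S) \<and>
        S = {p \<in> M_Rx \<times> M_Rx. \<iota> p \<in> f S \<inter> \<iota> ` (M_Rx \<times> M_Rx)}"
  proof -
    have "\<forall>S\<in>K. \<exists>U. openin (place_topology M_Rxy) U \<and>
        S = {p \<in> M_Rx \<times> M_Rx. \<iota> p \<in> U \<inter> \<iota> ` (M_Rx \<times> M_Rx)}"
      using \<open>\<forall>S\<in>K. indP \<iota> S\<close> unfolding indP_def by blast
    from bchoice[OF this] show ?thesis using that by blast
  qed
  have "openin (place_topology M_Rxy) (\<Union>(f ` K))" using f by auto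
  moreover have "\<Union>K = {p \<in> M_Rx \<times> M_Rx. \<iota> p \<in> \<Union>(f ` K) \<inter> \<iota> ` (M_Rx \<times> M_Rx)}"
    using f by blast
  ultimately show "indP \<iota> (\<Union>K)" unfolding indP_def by blast
qed

lemma indP_Int: "indP \<iota> S \<Longrightarrow> indP \<iota> T \<Longrightarrow> indP \<iota> (S \<inter> T)"
  using istop_indP[of \<iota>] unfolding istopology_def by blast

lemma indP_Union: "(\<And>S. S \<in> K \<Longrightarrow> indP \<iota> S) \<Longrightarrow> indP \<iota> (\<Union>K)"
  using istop_indP[of \<iota>] unfolding istopology_def by blast

lemma open_ind: "openin (induced_topology \<iota>) = indP \<iota>"
  unfolding induced_topology_def indP_def[symmetric] using istop_indP by simp

lemma Hprime_open: "openin (place_topology M_Rxy) (Hprime M_Rxy c)"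
  unfolding place_topology_def openin_subtopology openin_topology_generated_by_iff
  by (rule exI[of _ "Hprime M_Rxy c"]) (auto intro: generate_topology_on.Basis simp: Hprime_def)

lemma fst_open:
  assumes ce: "compatible_embedding \<iota>"
    and g: "generate_topology_on (range (Hprime M_Rx)) A"
  shows "indP \<iota> {p \<in> M_Rx \<times> M_Rx. fst p \<in> A}"
  using g
proof induction
  case Empty
  then show ?case unfolding indP_def by (intro exI[of _ "{}"]) auto
next
  case (Int a b)
  then have "indP \<iota> ({p \<in> M_Rx \<times> M_Rx. fst p \<in> a} \<inter> {p \<in> M_Rx \<times> M_Rx. fst p \<in> b})"
    by (intro indP_Int)
  moreover have "{p \<in> M_Rx \<times> M_Rx. fst p \<in> a} \<inter> {p \<in> M_Rx \<times> M_Rx. fst p \<in> b} = {p \<in> M_Rx \<times> M_Rx. fst p \<in> a \<inter> b}" by auto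
  ultimately show ?case by simp
next
  case (UN K)
  then have "indP \<iota> (\<Union>((\<lambda>k. {p \<in> M_Rx \<times> M_Rx. fst p \<in> k}) ` K))"
    by (intro indP_Union) auto
  moreover have "\<Union>((\<lambda>k. {p \<in> M_Rx \<times> M_Rx. fst p \<in> k}) ` K) = {p \<in> M_Rx \<times> M_Rx. fst p \<in> \<Union>K}" by auto
  ultimately show ?case by simp
next
  case (Basis s)
  then obtain b where s: "s = Hprime M_Rx b" by auto
  have "{p \<in> M_Rx \<times> M_Rx. fst p \<in> s} = {p \<in> M_Rx \<times> M_Rx. \<iota> p \<in> Hprime M_Rxy (emb_x b) \<inter> \<iota> ` (M_Rx \<times> M_Rx)}"
  proof (intro Collect_cong conj_cong refl)
    fix p assume p: "p \<in> M_Rx \<times> M_Rx"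
    have "rho (\<iota> p) = p" using ce p unfolding compatible_embedding_def by blast
    then have e: "\<iota> p (emb_x b) = fst p b" unfolding rho_def by (metis comp_apply fst_conv)
    have "\<iota> p \<in> M_Rxy" using ce p unfolding compatible_embedding_def by blast
    then show "(fst p \<in> s) = (\<iota> p \<in> Hprime M_Rxy (emb_x b) \<inter> \<iota> ` (M_Rx \<times> M_Rx))"
      using p e s unfolding Hprime_def by auto
  qed
  then show ?case unfolding indP_def using Hprime_open by blast
qed

lemma snd_open:
  assumes ce: "compatible_embedding \<iota>"
    and g: "generate_topology_on (range (Hprime M_Rx)) A"
  shows "indP \<iota> {p \<in> M_Rx \<times> M_Rx. snd p \<in> A}"
  using g
proof induction
  case Empty
  then show ?case unfolding indP_def by (intro exI[of _ "{}"]) auto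
next
  case (Int a b)
  then have "indP \<iota> ({p \<in> M_Rx \<times> M_Rx. snd p \<in> a} \<inter> {p \<in> M_Rx \<times> M_Rx. snd p \<in> b})"
    by (intro indP_Int)
  moreover have "{p \<in> M_Rx \<times> M_Rx. snd p \<in> a} \<inter> {p \<in> M_Rx \<times> M_Rx. snd p \<in> b} = {p \<in> M_Rx \<times> M_Rx. snd p \<in> a \<inter> b}" by auto
  ultimately show ?case by simp
next
  case (UN K)
  then have "indP \<iota> (\<Union>((\<lambda>k. {p \<in> M_Rx \<times> M_Rx. snd p \<in> k}) ` K))"
    by (intro indP_Union) auto
  moreover have "\<Union>((\<lambda>k. {p \<in> M_Rx \<times> M_Rx. snd p \<in> k}) ` K) = {p \<in> M_Rx \<times> M_Rx. snd p \<in> \<Union>K}" by auto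
  ultimately show ?case by simp
next
  case (Basis s)
  then obtain b where s: "s = Hprime M_Rx b" by auto
  have "{p \<in> M_Rx \<times> M_Rx. snd p \<in> s} = {p \<in> M_Rx \<times> M_Rx. \<iota> p \<in> Hprime M_Rxy (emb_y b) \<inter> \<iota> ` (M_Rx \<times> M_Rx)}"
  proof (intro Collect_cong conj_cong refl)
    fix p assume p: "p \<in> M_Rx \<times> M_Rx"
    have "rho (\<iota> p) = p" using ce p unfolding compatible_embedding_def by blast
    then have e: "\<iota> p (emb_y b) = snd p b" unfolding rho_def by (metis comp_apply snd_conv)
    have "\<iota> p \<in> M_Rxy" using ce p unfolding compatible_embedding_def by blast
    then show "(snd p \<in> s) = (\<iota> p \<in> Hprime M_Rxy (emb_y b) \<inter> \<iota> ` (M_Rx \<times> M_Rx))"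
      using p e s unfolding Hprime_def by auto
  qed
  then show ?case unfolding indP_def using Hprime_open by blast
qed

lemma rect_open:
  assumes ce: "compatible_embedding \<iota>"
    and U: "openin (place_topology M_Rx) U" and V: "openin (place_topology M_Rx) V"
  shows "indP \<iota> (U \<times> V)"
proof -
  obtain A where A: "generate_topology_on (range (Hprime M_Rx)) A" "U = A \<inter> M_Rx"
    using U unfolding place_topology_def openin_subtopology openin_topology_generated_by_iff by blast
  obtain B where B: "generate_topology_on (range (Hprime M_Rx)) B" "V = B \<inter> M_Rx"
    using V unfolding place_topology_def openin_subtopology openin_topology_generated_by_iff by blast
  have "indP \<iota> ({p \<in> M_Rx \<times> M_Rx. fst p \<in> A} \<inter> {p \<in> M_Rx \<times> M_Rx. snd p \<in> B})"
    using fst_open[OF ce A(1)] snd_open[OF ce B(1)] by (rule indP_Int)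
  moreover have "{p \<in> M_Rx \<times> M_Rx. fst p \<in> A} \<inter> {p \<in> M_Rx \<times> M_Rx. snd p \<in> B} = U \<times> V"
    using A(2) B(2) by auto
  ultimately show ?thesis by simp
qed

theorem theorem7p6:
  assumes "compatible_embedding \<iota>"
  shows "\<forall>W. openin (prod_topology (place_topology M_Rx) (place_topology M_Rx)) W
           \<longrightarrow> openin (induced_topology \<iota>) W"
proof (intro allI impI)
  fix W assume W: "openin (prod_topology (place_topology M_Rx) (place_topology M_Rx)) W"
  show "openin (induced_topology \<iota>) W"
  proof (subst openin_subopen, intro ballI)
    fix z assume "z \<in> W"
    then obtain x y where z: "z = (x,y)" "(x,y) \<in> W" by (cases z) auto
    then obtain U V where "openin (place_topology M_Rx) U" "openin (place_topology M_Rx) V"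
      "x \<in> U" "y \<in> V" "U \<times> V \<subseteq> W"
      using W unfolding openin_prod_topology_alt by blast
    then show "\<exists>T. openin (induced_topology \<iota>) T \<and> z \<in> T \<and> T \<subseteq> W"
      using rect_open[OF assms] z unfolding open_ind by blast
  qed
qed

end
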